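(* If $p$ is a prime with $p \equiv 3 \pmod 4$, then $S_2(p)$ is infinite.
   Context: For a positive integer $m$, consider positive rational solutions $(x,y)$ of $x^y = y^{mx}$ with $x \neq 1$. For such a solution, $r = \log y / \log x$ is a positive rational number (so $y = x^r$); write $r = a/b$ with $a,b$ positive coprime integers. For an integer $k \ge 1$, $S_k(m)$ denotes the set of such solutions $(x,y)$ for which $|a-b| = k$. *)

theory Defs
  imports Complex_Main "HOL-Computational_Algebra.Primes"
begin

definition S :: "nat \<Rightarrow> nat \<Rightarrow> (rat \<times> rat) set" where
  "S k m = {(x, y). x > 0 \<and> y > 0 \<and> x \<noteq> 1 \<and>
     real_of_rat x powr real_of_rat y = real_of_rat y powr (real m * real_of_rat x) \<and>
     (\<exists>a b :: nat. a > 0 \<and> b > 0 \<and> coprime a b \<and>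
        ln (real_of_rat y) / ln (real_of_rat x) = real a / real b \<and>
        \<bar>int a - int b\<bar> = int k)}"

end

theory Submission
  imports Defs "HOL-Analysis.Kronecker_Approximation_Theorem" "HOL-Computational_Algebra.Nth_Powers"
begin

lemma nonsq:
  fixes h k :: int
  assumes p: "prime (p::nat)" and cop: "coprime h k" and eq: "h^2 = int p * k^2"
  shows False
proof -
  have pi: "prime (int p)" using p by auto
  have "int p dvd h^2" using eq by simp
  then have "int p dvd h" using pi prime_dvd_power by blast
  then obtain c where c: "h = int p * c" by (auto simp: dvd_def)
  have "int p * (int p * c^2) = int p * k^2" using eq c by (simp add: power2_eq_square algebra_simps)
  then have "int p * c^2 = k^2" using p by (simp add: prime_gt_0_nat)
  then have "int p dvd k^2" by (metis dvd_triv_left)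
  then have "int p dvd k" using pi prime_dvd_power by blast
  then show False using \<open>int p dvd h\<close> cop pi
    by (meson coprime_common_divisor not_prime_unit)
qed

lemma sqrt_irr:
  assumes p: "prime (p::nat)"
  shows "sqrt (real p) \<notin> \<rat>"
proof
  assume "sqrt (real p) \<in> \<rat>"
  then obtain a b :: int where b: "b > 0" "coprime a b" "sqrt (real p) = of_int a / of_int b"
    by (meson Rats_cases')
  then have "real p = (of_int a / of_int b)^2" by (metis of_nat_0_le_iff real_sqrt_pow2)
  then have "real p * (of_int b)^2 = (of_int a)^2" using b by (simp add: field_simps)
  then have "real_of_int (a^2) = real_of_int (int p * b^2)" by simp
  then have "a^2 = int p * b^2" by (simp only: of_int_eq_iff)
  then show False using nonsq[OF p b(2)] by blast
qed

lemma approx_bound: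
  assumes p: "prime (p::nat)" and hk: "(h,k) \<in> approx_set (sqrt (real p))"
  shows "\<bar>h^2 - int p * k^2\<bar> \<le> 2 * int p"
proof -
  define \<theta> where "\<theta> = sqrt (real p)"
  have k: "k > 0" and d: "\<bar>\<theta> - h/k\<bar> < 1/k^2" using hk by (auto simp: approx_set_def \<theta>_def)
  define d where "d = \<theta> - h/k"
  have th0: "\<theta> \<ge> 0" by (simp add: \<theta>_def)
  have thp: "\<theta> \<le> real p"
  proof -
    have "real p \<ge> 1" using prime_ge_1_nat[OF p] by simp
    then have "sqrt (real p) \<le> sqrt (real p ^ 2)" by (intro real_sqrt_le_mono) (simp add: power2_eq_square)
    then show ?thesis by (simp add: \<theta>_def)
  qed
  have hh: "h = k * (\<theta> - d)" using k by (simp add: d_def)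
  have "real_of_int (h^2 - int p * k^2) = (k * (\<theta> - d))^2 - \<theta>^2 * k^2"
    using hh by (simp add: \<theta>_def)
  also have "\<dots> = - (k^2 * d) * (2*\<theta> - d)" by (simp add: algebra_simps power2_eq_square)
  finally have e: "real_of_int (h^2 - int p * k^2) = - (k^2 * d) * (2*\<theta> - d)" .
  have k1: "real_of_int k ^2 \<ge> 1" using k by (simp add: one_le_power)
  have dd: "\<bar>d\<bar> < 1/(real_of_int k)^2" using d by (simp add: d_def)
  have kp: "(real_of_int k)^2 > 0" using k by simp
  have a1: "\<bar>k^2 * d\<bar> < 1"
  proof -
    have "\<bar>k^2*d\<bar> = (real_of_int k)^2*\<bar>d\<bar>" by (simp add: abs_mult)
    also have "\<dots> < (real_of_int k)^2 * (1/(real_of_int k)^2)" using dd kp by (rule mult_strict_left_mono)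
    also have "\<dots> = 1" using kp by simp
    finally show ?thesis .
  qed
  have "1/(real_of_int k)^2 \<le> 1" using k1 divide_le_eq_1_pos[OF kp, of 1] by simp
  then have a2: "\<bar>d\<bar> < 1" using dd by linarith
  have a3: "\<bar>2*\<theta> - d\<bar> \<le> 2*\<theta> + 1" using a2 th0 by linarith
  have "\<bar>real_of_int (h^2 - int p * k^2)\<bar> = \<bar>k^2 * d\<bar> * \<bar>2*\<theta> - d\<bar>" using e by (simp add: abs_mult)
  also have "\<dots> \<le> 1 * (2*\<theta>+1)" using a1 a3 by (intro mult_mono) auto
  also have "\<dots> \<le> 2 * real p + 1" using thp by simp
  finally have "\<bar>real_of_int (h^2 - int p * k^2)\<bar> \<le> 2 * real p + 1" .
  then have "\<bar>h^2 - int p * k^2\<bar> \<le> 2 * int p + 1" by linarith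
  moreover have "\<bar>real_of_int (h^2 - int p * k^2)\<bar> < 2 * real p + 1"
  proof -
    have "\<bar>k^2 * d\<bar> * \<bar>2*\<theta> - d\<bar> \<le> \<bar>k^2 * d\<bar> * (2*\<theta>+1)"
      using a3 by (intro mult_left_mono) auto
    also have "\<dots> < 1 * (2*\<theta>+1)" using a1 th0 by (intro mult_strict_right_mono) auto
    finally have "\<bar>k^2 * d\<bar> * \<bar>2*\<theta> - d\<bar> < 1 * (2*\<theta>+1)" .
    then show ?thesis using e thp by (simp add: abs_mult)
  qed
  ultimately show ?thesis by linarith
qed


lemma pell_exists:
  assumes p: "prime (p::nat)"
  shows "\<exists>x y::nat. x^2 = p*y^2 + 1 \<and> y > 0"
proof -
  define \<theta> where "\<theta> = sqrt (real p)"
  define A where "A = approx_set \<theta>"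
  have infA: "infinite A" using sqrt_irr[OF p] rational_iff_finite_approx_set
    unfolding A_def \<theta>_def by blast
  define n where "n = (\<lambda>(h::int,k::int). h^2 - int p * k^2)"
  have "n ` A \<subseteq> {-2*int p..2*int p}"
    using approx_bound[OF p] by (force simp: n_def A_def \<theta>_def abs_le_iff)
  then have "finite (n ` A)" by (rule finite_subset) simp
  from pigeonhole_infinite[OF infA this] obtain a0 where a0: "a0 \<in> A" "infinite {a\<in>A. n a = n a0}"
    by blast
  define N where "N = n a0"
  define F where "F = {a\<in>A. n a = N}"
  have infF: "infinite F" using a0 by (simp add: F_def N_def)
  have N0: "N \<noteq> 0"
  proof
    assume "N = 0"
    obtain h k where hk: "a0 = (h,k)" by fastforce
    have "coprime h k" using a0(1) hk by (simp add: A_def approx_set_def)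
    moreover have "h^2 = int p * k^2" using \<open>N = 0\<close> hk by (simp add: N_def n_def)
    ultimately show False using nonsq[OF p] by blast
  qed
  define M where "M = \<bar>N\<bar>"
  have M0: "M > 0" using N0 by (simp add: M_def)
  define g where "g = (\<lambda>(h::int,k::int). (h mod M, k mod M))"
  have "g ` F \<subseteq> {0..M} \<times> {0..M}"
    using M0 by (auto simp: g_def order.strict_implies_order)
  then have "finite (g ` F)" by (rule finite_subset) simp
  then have "\<not> inj_on g F" using infF finite_imageD by blast
  then obtain u v where uv: "u \<in> F" "v \<in> F" "u \<noteq> v" "g u = g v"
    unfolding inj_on_def by blast
  obtain h1 k1 where u: "u = (h1,k1)" by fastforce
  obtain h2 k2 where v: "v = (h2,k2)" by fastforce
  have k1: "k1 > 0" "coprime h1 k1" and k2: "k2 > 0" "coprime h2 k2"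
    using uv u v by (auto simp: F_def A_def approx_set_def)
  have n1: "h1^2 - int p * k1^2 = N" and n2: "h2^2 - int p * k2^2 = N"
    using uv u v by (auto simp: F_def n_def)
  have "h2 mod M = h1 mod M" "k2 mod M = k1 mod M" using uv u v by (auto simp: g_def)
  then have "M dvd h2 - h1" "M dvd k2 - k1" by (auto simp: mod_eq_dvd_iff)
  then have "N dvd h2 - h1" "N dvd k2 - k1" by (auto simp: M_def)
  then obtain \<alpha> \<beta> where \<alpha>: "h2 - h1 = N * \<alpha>" and \<beta>: "k2 - k1 = N * \<beta>"
    by (auto simp: dvd_def)
  have h2: "h2 = h1 + N*\<alpha>" and k2': "k2 = k1 + N*\<beta>" using \<alpha> \<beta> by auto
  define x where "x = 1 + h1*\<alpha> - int p*k1*\<beta>"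
  define y where "y = h1*\<beta> - \<alpha>*k1"
  have X: "h1*h2 - int p*k1*k2 = N*x"
  proof -
    have "h1*h2 - int p*k1*k2 = (h1^2 - int p * k1^2) + N*(h1*\<alpha> - int p*k1*\<beta>)"
      unfolding h2 k2' by (simp add: algebra_simps power2_eq_square)
    then show ?thesis using n1 by (simp add: x_def algebra_simps)
  qed
  have Y: "h1*k2 - h2*k1 = N*y"
    unfolding h2 k2' y_def by (simp add: algebra_simps)
  have ident: "(h1*h2 - int p*k1*k2)^2 - int p*(h1*k2 - h2*k1)^2 = (h1^2 - int p * k1^2)*(h2^2 - int p * k2^2)"
    by (simp add: algebra_simps power2_eq_square)
  then have "N^2 * (x^2 - int p * y^2) = N^2 * 1"
    unfolding X Y n1 n2 by (simp add: algebra_simps power2_eq_square)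
  then have xy: "x^2 - int p * y^2 = 1" using N0 by simp
  have y0: "y \<noteq> 0"
  proof
    assume "y = 0"
    then have e: "h1*k2 = h2*k1" using Y by simp
    have "k1 dvd h1*k2" using e by simp
    then have "k1 dvd k2" using k1(2) by (metis coprime_commute coprime_dvd_mult_right_iff)
    moreover have "k2 dvd h2*k1" using e by (metis dvd_triv_right)
    then have "k2 dvd k1" using k2(2) by (metis coprime_commute coprime_dvd_mult_right_iff)
    ultimately have "k1 = k2" using k1 k2 by (intro zdvd_antisym_nonneg) auto
    then have "h1 = h2" using e k1 by simp
    then show False using uv u v \<open>k1 = k2\<close> by simp
  qed
  define xn where "xn = nat \<bar>x\<bar>"
  define yn where "yn = nat \<bar>y\<bar>"
  have "int (xn^2) = int (p*yn^2 + 1)"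
    using xy by (simp add: xn_def yn_def)
  then have "xn^2 = p*yn^2 + 1" by (simp only: of_nat_eq_iff)
  moreover have "yn > 0" using y0 by (simp add: yn_def)
  ultimately show ?thesis by blast
qed

lemma sq_split:
  fixes a b c :: nat
  assumes "coprime a b" "a*b = c^2"
  shows "\<exists>u. a = u^2" "\<exists>v. b = v^2"
proof -
  have "is_nth_power 2 (a*b)" using assms(2) by (auto intro: is_nth_powerI)
  then have "is_nth_power 2 a" "is_nth_power 2 b"
    using is_nth_power_mult_coprime_nat_iff[OF assms(1)] by auto
  then show "\<exists>u. a = u^2" "\<exists>v. b = v^2" by (auto simp: is_nth_power_def)
qed

lemma sq_mod4: "(s::nat)^2 mod 4 = 0 \<or> (s::nat)^2 mod 4 = 1"
proof (cases "even s")
  case True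
  then obtain u where "s = 2*u" by blast
  then show ?thesis by (simp add: power2_eq_square)
next
  case False
  then obtain u where "s = 2*u+1" using oddE by blast
  then have "s^2 = 4*(u*u+u) + 1" by (simp add: power2_eq_square algebra_simps)
  then show ?thesis by simp
qed

lemma m4a: "(q::nat) mod 4 = 0 \<or> q mod 4 = 1 \<Longrightarrow> (q+1) mod 4 = 1 \<or> (q+1) mod 4 = 2"
  by presburger

lemma m4b:
  assumes "(p::nat) mod 4 = 3" "u mod 4 = 0 \<or> u mod 4 = 1"
  shows "(p*u) mod 4 = 0 \<or> (p*u) mod 4 = 3"
proof -
  have "(p*u) mod 4 = ((p mod 4)*(u mod 4)) mod 4" by (simp add: mod_mult_eq)
  then show ?thesis using assms by auto
qed

lemma m4d: "(2 + K*4) mod 4 = (2::nat)"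
  by (simp only: mod_mult_self1) simp

lemma cop2: "odd (m::nat) \<Longrightarrow> coprime m (m+2)"
proof (rule coprimeI)
  fix d assume o: "odd m" and d: "d dvd m" "d dvd m+2"
  then have "d dvd 2" using dvd_add_right_iff by blast
  then have "d \<noteq> 0" by (rule_tac notI) simp
  have "d \<le> 2" using \<open>d dvd 2\<close> by (rule dvd_imp_le) simp
  note \<open>d \<noteq> 0\<close> this
  then have "d = 1 \<or> d = 2" by auto
  then show "is_unit d" using o d(1) by auto
qed

lemma descent:
  assumes p: "prime p" "p mod 4 = 3"
  shows "x^2 = p*y^2 + 1 \<Longrightarrow> y > 0 \<Longrightarrow> \<exists>s t::nat. t > 0 \<and> (s^2 = p*t^2 + 2 \<or> s^2 + 2 = p*t^2)"
proof (induction y arbitrary: x rule: less_induct)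
  case (less y x)
  have pp: "prime p" using p by simp
  show ?case
  proof (cases "even x")
    case True
    have "x \<noteq> 0"
    proof
      assume "x = 0" then show False using less.prems(1) by simp
    qed
    then obtain m where xm: "x = Suc m" by (cases x) auto
    have mo: "odd m" using True xm by simp
    have "m*(m+2) = p*y^2"
      using less.prems(1) unfolding xm by (simp add: power2_eq_square algebra_simps)
    have cop: "coprime m (m+2)" using cop2[OF mo] .
    have "p dvd m*(m+2)" using \<open>m*(m+2) = p*y^2\<close> by (metis dvd_triv_left)
    then have "p dvd m \<or> p dvd m+2" using pp prime_dvd_mult_iff by blast
    then show ?thesis
    proof
      assume "p dvd m"
      then obtain c where c: "m = p*c" by blast
      have "p*(c*(m+2)) = p*y^2" using \<open>m*(m+2) = p*y^2\<close> c by (simp add: algebra_simps)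
      then have e: "c*(m+2) = y^2" using pp by (simp add: prime_gt_0_nat)
      have "coprime c (m+2)" using cop c by simp
      from sq_split[OF this e] obtain t s where "c = t^2" "m+2 = s^2" by blast
      moreover have "t > 0" using mo c \<open>c = t^2\<close> by (cases "t = 0") auto
      ultimately have "t > 0 \<and> s^2 = p*t^2 + 2" using c by simp
      then show ?thesis by blast
    next
      assume "p dvd m+2"
      then obtain c where c: "m+2 = p*c" by blast
      have "p*(m*c) = m*(p*c)" by (simp add: algebra_simps)
      also have "\<dots> = m*(m+2)" using c by simp
      also have "\<dots> = p*y^2" by fact
      finally have "p*(m*c) = p*y^2" .
      then have e: "m*c = y^2" using pp by (simp add: prime_gt_0_nat)
      have "coprime m c" using cop c by simp
      from sq_split[OF this e] obtain s t where "m = s^2" "c = t^2" by blast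
      moreover have "t > 0" using c \<open>c = t^2\<close> by (cases "t = 0") auto
      ultimately have "t > 0 \<and> s^2 + 2 = p*t^2" using c by simp
      then show ?thesis by blast
    qed
  next
    case False
    then obtain m where xm: "x = 2*m+1" using oddE by blast
    have e4: "4*(m*(m+1)) = p*y^2"
      using less.prems(1) unfolding xm by (simp add: power2_eq_square algebra_simps)
    have podd: "odd p" using p(2) by presburger
    have "even y"
    proof (rule ccontr)
      assume "odd y"
      then have "odd (p*y^2)" using podd by simp
      then show False using e4 by (metis even_mult_iff even_numeral)
    qed
    then obtain z where yz: "y = 2*z" by blast
    have e1: "m*(m+1) = p*z^2" using e4 yz by (simp add: power2_eq_square algebra_simps)
    have z0: "z > 0" using less.prems(2) yz by simp
    have cop: "coprime m (m+1)" by simp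
    have "p dvd m*(m+1)" using e1 by (metis dvd_triv_left)
    then have "p dvd m \<or> p dvd m+1" using pp prime_dvd_mult_iff by blast
    then show ?thesis
    proof
      assume "p dvd m"
      then obtain c where c: "m = p*c" by blast
      have "p*(c*(m+1)) = p*z^2" using e1 c by (simp add: algebra_simps)
      then have e: "c*(m+1) = z^2" using pp by (simp add: prime_gt_0_nat)
      have "coprime (p*c) (m+1)" using cop by (simp only: c[symmetric])
      then have "coprime c (m+1)" by simp
      from sq_split[OF this e] obtain t s where ts: "c = t^2" "m+1 = s^2" by blast
      have "m > 0" using e1 z0 pp by (cases "m = 0") (auto simp: prime_gt_0_nat)
      then have t0: "t > 0" using c ts by (cases "t = 0") auto
      have s0: "s > 0" using ts by (cases "s = 0") auto
      have "z^2 = c*(m+1)" using e by simp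
      also have "\<dots> = t^2 * s^2" by (simp only: ts)
      also have "\<dots> = (t * s)^2" by (simp add: power_mult_distrib)
      finally have "z^2 = (t * s)^2" .
      then have "z = t * s" by (simp add: power2_eq_iff_nonneg)
      then have "t \<le> z" using s0 by simp
      then have "t < y" using yz z0 by simp
      moreover have "s^2 = p*t^2 + 1" using ts c by simp
      ultimately show ?thesis using less.IH[of t s] t0 by simp
    next
      assume "p dvd m+1"
      then obtain c where c: "m+1 = p*c" by blast
      have "p*(m*c) = m*(p*c)" by (simp add: algebra_simps)
      also have "\<dots> = m*(m+1)" using c by simp
      also have "\<dots> = p*z^2" by (rule e1)
      finally have "p*(m*c) = p*z^2" .
      then have e: "m*c = z^2" using pp by (simp add: prime_gt_0_nat)
      have "coprime m (p*c)" using cop by (simp only: c[symmetric])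
      then have "coprime m c" by simp
      from sq_split[OF this e] obtain s t where ts: "m = s^2" "c = t^2" by blast
      have eq: "s^2 + 1 = p*t^2" using ts c by simp
      have "(s^2 + 1) mod 4 = (p*t^2) mod 4" using eq by simp
      moreover have "(s^2 + 1) mod 4 = 1 \<or> (s^2 + 1) mod 4 = 2" using m4a[OF sq_mod4[of s]] .
      moreover have "(p*t^2) mod 4 = 0 \<or> (p*t^2) mod 4 = 3" using m4b[OF p(2) sq_mod4[of t]] .
      ultimately show ?thesis by linarith
    qed
  qed
qed


definition psol :: "nat \<Rightarrow> int \<Rightarrow> nat \<Rightarrow> nat \<Rightarrow> bool" where
  "psol p e s t \<longleftrightarrow> s > 0 \<and> t > 0 \<and> (int s)^2 - int p * (int t)^2 = e"

lemma grow:
  assumes xy: "x^2 = p*y^2 + 1" "y > 0" and sol: "psol p e s t"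
  shows "psol p e (s*x + p*t*y) (s*y + t*x) \<and> s*y + t*x > t"
proof -
  have x0: "x > 0" using xy(1) by (cases x) auto
  have s0: "s > 0" and t0: "t > 0" and se: "(int s)^2 - int p * (int t)^2 = e"
    using sol by (auto simp: psol_def)
  have "s*y \<ge> 1" using s0 xy(2) by simp
  moreover have "t*x \<ge> t" using x0 by simp
  ultimately have gt: "s*y + t*x > t" by linarith
  have "int (x^2) = int (p*y^2 + 1)" using xy(1) by simp
  then have X: "(int x)^2 - int p * (int y)^2 = 1" by simp
  have "(int (s*x + p*t*y))^2 - int p * (int (s*y + t*x))^2
        = ((int s)^2 - int p * (int t)^2) * ((int x)^2 - int p * (int y)^2)"
    by (simp add: algebra_simps power2_eq_square)
  also have "\<dots> = e" using se X by simp
  finally have "(int (s*x + p*t*y))^2 - int p * (int (s*y + t*x))^2 = e" .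
  moreover have "s*x + p*t*y > 0" using s0 x0 by simp
  ultimately show ?thesis using gt s0 xy(2) by (simp add: psol_def)
qed

lemma unbounded:
  assumes xy: "x^2 = p*y^2 + 1" "y > 0" and sol: "psol p e s0 t0"
  shows "\<exists>s t. psol p e s t \<and> t \<ge> n"
proof (induction n)
  case 0
  then show ?case using sol by blast
next
  case (Suc n)
  then obtain s t where "psol p e s t" "t \<ge> n" by blast
  with grow[OF xy this(1)] show ?case by (meson Suc_leI order.strict_trans1)
qed

lemma memb:
  assumes p: "prime p" "p mod 4 = 3" and sol: "psol p e s t" and e: "e = 2 \<or> e = -2"
    and t2: "t \<ge> 2"
  shows "\<exists>z \<in> S 2 p. ln (real_of_rat (snd z)) / ln (real_of_rat (fst z))
           = 1 + real_of_int e / (real p * real t^2)"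
proof -
  define a where "a = s^2"
  define b where "b = p*t^2"
  have s0: "s > 0" and t0: "t > 0" and se: "(int s)^2 - int p * (int t)^2 = e"
    using sol by (auto simp: psol_def)
  have ab: "int a = int b + e" using se by (simp add: a_def b_def)
  have p3: "p \<ge> 3" using p(2) by presburger
  have podd: "odd p" using p(2) by presburger
  have c12: "(e = 2 \<and> a = b + 2) \<or> (e = -2 \<and> b = a + 2)" using e ab by auto
  have todd: "odd t"
  proof
    assume "even t"
    then obtain w where "t = 2*w" by blast
    then have b4: "b = 4*(p*w^2)" by (simp add: b_def power2_eq_square)
    have "a mod 4 = 2" using c12
    proof
      assume "e = 2 \<and> a = b + 2"
      then have "a = 2 + (p*w^2)*4" using b4 by simp
      then show ?thesis using m4d[of "p*w^2"] by (simp only:)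
    next
      assume "e = -2 \<and> b = a + 2"
      then have h: "a + 2 = 4*(p*w^2)" using b4 by simp
      then have "p*w^2 > 0" by (cases "p*w^2") auto
      then have "a = 2 + (p*w^2 - 1)*4" using h by simp
      then show ?thesis using m4d[of "p*w^2 - 1"] by (simp only:)
    qed
    then show False using sq_mod4[of s] by (simp add: a_def)
  qed
  have bodd: "odd b" using podd todd by (simp add: b_def)
  have cop: "coprime a b"
  proof (cases "e = 2")
    case True
    then have "a = b + 2" using c12 by auto
    then show ?thesis using cop2[OF bodd] by (simp add: coprime_commute)
  next
    case False
    then have "b = a + 2" using c12 by auto
    moreover then have "odd a" using bodd by simp
    ultimately show ?thesis using cop2 by simp
  qed
  have t4: "t^2 \<ge> 4" using t2 power_mono[OF t2, of 2] by simp
  have "3*t^2 \<le> p*t^2" using p3 by simp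
  have st: "s \<noteq> t"
  proof
    assume "s = t"
    then show False using c12 t4 \<open>3*t^2 \<le> p*t^2\<close> by (auto simp: a_def b_def)
  qed
  define Q :: rat where "Q = (if e = 2 then of_nat s / of_nat t else of_nat t / of_nat s)"
  define q where "q = real_of_rat Q"
  have qd: "q = (if e = 2 then real s / real t else real t / real s)"
    by (simp add: q_def Q_def of_rat_divide)
  have Q0: "Q > 0" using s0 t0 by (simp add: Q_def)
  have q0: "q > 0" using Q0 by (simp add: q_def)
  have q1: "q \<noteq> 1" using st s0 t0 by (auto simp: qd)
  have lnq: "ln q \<noteq> 0" using q0 q1 by simp
  define x where "x = Q^b"
  define y where "y = Q^a"
  have rx: "real_of_rat x = q^b" by (simp add: x_def q_def of_rat_power)
  have ry: "real_of_rat y = q^a" by (simp add: y_def q_def of_rat_power)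
  have b0: "b > 0" using p3 t0 by (simp add: b_def)
  have a0: "a > 0" using s0 by (simp add: a_def)
  have key: "real b * q^a = real a * real p * q^b"
  proof (cases "e = 2")
    case True
    then have ab2: "a = b + 2" using c12 by auto
    have "real b * q^2 = real a * real p"
      using True t0 by (simp add: qd a_def b_def power_divide field_simps)
    have "real b * q^a = (real b * q^2) * q^b" unfolding ab2 by (simp add: power_add mult_ac power2_eq_square)
    also have "\<dots> = real a * real p * q^b" by (simp only: \<open>real b * q^2 = real a * real p\<close>)
    finally show ?thesis .
  next
    case False
    then have ab2: "b = a + 2" using c12 by auto
    have "real a * real p * q^2 = real b"
      using False s0 by (simp add: qd a_def b_def power_divide field_simps)
    then show ?thesis using ab2 by (metis power_add mult.assoc mult.commute)
  qed
  have xpos: "x > 0" using Q0 by (simp add: x_def)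
  have ypos: "y > 0" using Q0 by (simp add: y_def)
  have lnx: "ln (real_of_rat x) = real b * ln q" by (simp add: rx ln_realpow)
  have lny: "ln (real_of_rat y) = real a * ln q" by (simp add: ry ln_realpow)
  have x1: "x \<noteq> 1"
  proof
    assume "x = 1"
    then have "ln (real_of_rat x) = 0" by simp
    then show False using lnx b0 lnq by simp
  qed
  have rxpos: "real_of_rat x > 0" using xpos by simp
  have rypos: "real_of_rat y > 0" using ypos by simp
  have eq: "real_of_rat x powr real_of_rat y = real_of_rat y powr (real p * real_of_rat x)"
  proof -
    have "real_of_rat x powr real_of_rat y = exp (q^a * (real b * ln q))"
      using rxpos by (simp add: powr_def lnx ry)
    also have "\<dots> = exp ((real b * q^a) * ln q)" by (simp add: algebra_simps)
    also have "\<dots> = exp ((real a * real p * q^b) * ln q)" by (simp only: key)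
    also have "\<dots> = real_of_rat y powr (real p * real_of_rat x)"
      using rypos by (simp add: powr_def lny rx algebra_simps)
    finally show ?thesis .
  qed
  have ratio: "ln (real_of_rat y) / ln (real_of_rat x) = real a / real b"
    using lnq by (simp add: lnx lny)
  have "real a = real b + real_of_int e" using ab by linarith
  then have ratio2: "real a / real b = 1 + real_of_int e / (real p * real t^2)"
    using b0 by (simp add: b_def field_simps)
  have diff: "\<bar>int a - int b\<bar> = int 2" using c12 by auto
  have "(x, y) \<in> S 2 p"
    unfolding S_def using xpos ypos x1 eq a0 b0 cop ratio diff by blast
  then show ?thesis using ratio ratio2 by force
qed

theorem lemma6:
  fixes p :: nat
  assumes "prime p" and "p mod 4 = 3"
  shows "infinite (S 2 p)"
proof
  assume finS: "finite (S 2 p)"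
  have p3: "p \<ge> 3" using assms(2) by presburger
  obtain X Y where XY: "X^2 = p*Y^2 + 1" "Y > 0" using pell_exists[OF assms(1)] by blast
  obtain s0 t0 where st0: "t0 > 0" "s0^2 = p*t0^2 + 2 \<or> s0^2 + 2 = p*t0^2"
    using descent[OF assms XY] by blast
  obtain e where e: "e = 2 \<or> e = -2" "psol p e s0 t0"
  proof (cases "s0^2 = p*t0^2 + 2")
    case True
    then have "s0 > 0" by (cases s0) auto
    moreover have "(int s0)^2 - int p * (int t0)^2 = 2"
      using arg_cong[OF True, of int] by simp
    ultimately show ?thesis using that[of 2] st0 by (simp add: psol_def)
  next
    case False
    then have eq: "s0^2 + 2 = p*t0^2" using st0 by simp
    have "1 \<le> t0^2" using st0(1) by simp
    from mult_le_mono[OF p3 this] have "p*t0^2 \<ge> 3" by simp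
    then have "s0 > 0" using eq by (cases s0) auto
    moreover have "(int s0)^2 - int p * (int t0)^2 = -2"
      using arg_cong[OF eq, of int] by simp
    ultimately show ?thesis using that[of "-2"] st0 by (simp add: psol_def)
  qed
  define T where "T = {t. t \<ge> 2 \<and> (\<exists>s. psol p e s t)}"
  have infT: "infinite T"
    unfolding infinite_nat_iff_unbounded_le
  proof
    fix m
    obtain s t where "psol p e s t" "t \<ge> max m 2" using unbounded[OF XY e(2)] by blast
    then show "\<exists>n\<ge>m. n \<in> T" unfolding T_def by auto
  qed
  define \<rho> where "\<rho> = (\<lambda>t::nat. 1 + real_of_int e / (real p * real t^2))"
  define \<phi> where "\<phi> = (\<lambda>z::rat\<times>rat. ln (real_of_rat (snd z)) / ln (real_of_rat (fst z)))"
  have sub: "\<rho> ` T \<subseteq> \<phi> ` S 2 p"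
  proof
    fix r assume "r \<in> \<rho> ` T"
    then obtain t s where t: "r = \<rho> t" "t \<ge> 2" "psol p e s t" unfolding T_def by blast
    from memb[OF assms t(3) e(1) t(2)] obtain z where "z \<in> S 2 p" "\<phi> z = \<rho> t"
      unfolding \<phi>_def \<rho>_def by blast
    then show "r \<in> \<phi> ` S 2 p" using t(1) by force
  qed
  have inj: "inj_on \<rho> T"
  proof
    fix t1 t2 assume t: "t1 \<in> T" "t2 \<in> T" "\<rho> t1 = \<rho> t2"
    have "t1 > 0" "t2 > 0" using t(1,2) by (auto simp: T_def)
    have e0: "real_of_int e \<noteq> 0" using e(1) by auto
    have "real_of_int e / (real p * real t1^2) = real_of_int e / (real p * real t2^2)"
      using t(3) by (simp add: \<rho>_def)
    then have "real p * real t1^2 = real p * real t2^2"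
      using e0 p3 \<open>t1 > 0\<close> \<open>t2 > 0\<close> by (simp add: field_simps)
    then have "real t1^2 = real t2^2" using p3 by simp
    then show "t1 = t2" by (simp add: power2_eq_iff_nonneg)
  qed
  have "finite (\<phi> ` S 2 p)" using finS by simp
  then have "finite (\<rho> ` T)" using sub finite_subset by blast
  then have "finite T" using inj finite_imageD by blast
  then show False using infT by simp
qed

end
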